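(* Let $K\ge 1$, $c>0$, $P_{\max}>0$, and for $k,k'\in\{1,\dots,K\}$ let $a_{k,k'}\ge 0$, $d_k\ge 0$, $n_k>0$ with $a_{k,k}\ge d_k$, and $\gamma_k\ge 0$. Define on $[0,\infty)^K$ $$f_k(\mathbf{P})=\log_2\Big(\sum_{k'}a_{k,k'}P_{k'}+n_k\Big),\quad g_k(\mathbf{P})=\log_2\Big(\sum_{k'}a_{k,k'}P_{k'}-d_kP_k+n_k\Big),$$ and for a fixed $\mathbf P^{(n)}\in[0,\infty)^K$ the first-order Taylor expansions $$\hat f_k(\mathbf{P},\mathbf{P}^{(n)})=f_k(\mathbf{P}^{(n)})+\frac{\sum_{k'}a_{k,k'}(P_{k'}-P^{(n)}_{k'})}{\ln 2\,(\sum_{k'}a_{k,k'}P^{(n)}_{k'}+n_k)},$$ $$\hat g_k(\mathbf{P},\mathbf{P}^{(n)})=g_k(\mathbf{P}^{(n)})+\frac{\sum_{k'}a_{k,k'}(P_{k'}-P^{(n)}_{k'})-d_k(P_k-P^{(n)}_k)}{\ln 2\,(\sum_{k'}a_{k,k'}P^{(n)}_{k'}-d_kP^{(n)}_k+n_k)},$$ $\hat R_k(\mathbf P,\mathbf P^{(n)})=c(\hat f_k(\mathbf P,\mathbf P^{(n)})-g_k(\mathbf P))$, $\overline R_k(\mathbf P,\mathbf P^{(n)})=c(f_k(\mathbf P)-\hat g_k(\mathbf P,\mathbf P^{(n)}))$, and $P_{\mathrm N}(\mathbf P,x)=C_0+\sum_k\Delta_kP_k+\sum_k\beta_kx_k$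 with $C_0>0$, $\Delta_k\ge 1$, $\beta_k>0$. Consider the problem $$\mathcal P_l':\ \max_{\mathbf P}\ \frac{\sum_k\overline R_k(\mathbf P,\mathbf P^{(n)})}{P_{\mathrm N}(\mathbf P,(\hat R_k(\mathbf P,\mathbf P^{(n)}))_k)}\quad\text{s.t. } 0\le P_k\le P_{\max},\ \ \gamma_k\Big(\sum_{k'}a_{k,k'}P_{k'}+n_k\Big)-(1+\gamma_k)d_kP_k\le 0\ \ \forall k.$$ Then $\mathcal P_l'$ satisfies the standard concave-convex fractional programming (CCFP) formulation.
   Context: Model: uplink network with $K$ users, $P_k$ transmit power of user $k$; $c=\tau_uB/(\tau_u+\tau_p)$, $a_{k,k'}=\mathbb{E}\{|\mathrm{IS}_{k,k'}|^2\}$, $d_k=|\mathbb{E}\{\mathrm{DS}_k\}|^2$, $n_k$ effective noise power; $c(f_k-g_k)$ is the rate of user $k$; $P_{\mathrm N}$ is the total network power consumption, affine in the user rates with positive coefficients; the second constraint family is the QoS (minimum rate) constraint with $\gamma_k=2^{\tau_cR_{k,\min}/(\tau_uB)}-1$. A maximization problem $\max_{\mathbf P\in\mathcal X} A(\mathbf P)/B(\mathbf P)$ is a concave-convex fractional program (CCFP) if the numerator $A$ is concave, the denominator $B$ is convex and nonnegative (positive) on the feasible set, and the feasible set $\mathcal X$ is convex. *)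

theory Defs
  imports "HOL-Analysis.Analysis"
begin

text \<open>Users are indexed by a finite type 'k (so K = CARD('k) \<ge> 1);
  power vectors are elements of real^'k.\<close>

definition CCFP :: "('a::real_vector \<Rightarrow> real) \<Rightarrow> ('a \<Rightarrow> real) \<Rightarrow> 'a set \<Rightarrow> bool" where
  "CCFP A B X \<longleftrightarrow> concave_on X A \<and> convex_on X B \<and> (\<forall>x\<in>X. B x > 0) \<and> convex X"

definition f_fun :: "('k::finite \<Rightarrow> 'k \<Rightarrow> real) \<Rightarrow> ('k \<Rightarrow> real) \<Rightarrow> 'k \<Rightarrow> real^'k \<Rightarrow> real" where
  "f_fun a nn k P = log 2 ((\<Sum>k'\<in>UNIV. a k k' * P$k') + nn k)"

definition g_fun :: "('k::finite \<Rightarrow> 'k \<Rightarrow> real) \<Rightarrow> ('k \<Rightarrow> real) \<Rightarrow> ('k \<Rightarrow> real) \<Rightarrow> 'k \<Rightarrow> real^'k \<Rightarrow> real" where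
  "g_fun a d nn k P = log 2 ((\<Sum>k'\<in>UNIV. a k k' * P$k') - d k * P$k + nn k)"

definition f_hat :: "('k::finite \<Rightarrow> 'k \<Rightarrow> real) \<Rightarrow> ('k \<Rightarrow> real) \<Rightarrow> 'k \<Rightarrow> real^'k \<Rightarrow> real^'k \<Rightarrow> real" where
  "f_hat a nn k P Pn = f_fun a nn k Pn +
     (\<Sum>k'\<in>UNIV. a k k' * (P$k' - Pn$k')) / (ln 2 * ((\<Sum>k'\<in>UNIV. a k k' * Pn$k') + nn k))"

definition g_hat :: "('k::finite \<Rightarrow> 'k \<Rightarrow> real) \<Rightarrow> ('k \<Rightarrow> real) \<Rightarrow> ('k \<Rightarrow> real) \<Rightarrow> 'k \<Rightarrow> real^'k \<Rightarrow> real^'k \<Rightarrow> real" where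
  "g_hat a d nn k P Pn = g_fun a d nn k Pn +
     ((\<Sum>k'\<in>UNIV. a k k' * (P$k' - Pn$k')) - d k * (P$k - Pn$k)) /
       (ln 2 * ((\<Sum>k'\<in>UNIV. a k k' * Pn$k') - d k * Pn$k + nn k))"

definition R_hat where
  "R_hat c a d nn k P Pn = c * (f_hat a nn k P Pn - g_fun a d nn k P)"

definition R_bar where
  "R_bar c a d nn k P Pn = c * (f_fun a nn k P - g_hat a d nn k P Pn)"

definition P_N :: "real \<Rightarrow> ('k::finite \<Rightarrow> real) \<Rightarrow> ('k \<Rightarrow> real) \<Rightarrow> real^'k \<Rightarrow> ('k \<Rightarrow> real) \<Rightarrow> real" where
  "P_N C0 \<Delta> \<beta> P x = C0 + (\<Sum>k\<in>UNIV. \<Delta> k * P$k) + (\<Sum>k\<in>UNIV. \<beta> k * x k)"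

definition feasible_set :: "real \<Rightarrow> ('k::finite \<Rightarrow> 'k \<Rightarrow> real) \<Rightarrow> ('k \<Rightarrow> real) \<Rightarrow> ('k \<Rightarrow> real) \<Rightarrow> ('k \<Rightarrow> real) \<Rightarrow> (real^'k) set" where
  "feasible_set Pmax a d nn \<gamma> = {P. \<forall>k. 0 \<le> P$k \<and> P$k \<le> Pmax \<and>
      \<gamma> k * ((\<Sum>k'\<in>UNIV. a k k' * P$k') + nn k) - (1 + \<gamma> k) * d k * P$k \<le> 0}"

end

theory Submission
  imports Defs
begin

definition affn :: "('a::real_vector \<Rightarrow> real) \<Rightarrow> bool" where
  "affn L \<longleftrightarrow> (\<forall>x y u v. u + v = 1 \<longrightarrow> L (u *\<^sub>R x + v *\<^sub>R y) = u * L x + v * L y)"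

lemma affn_const: "affn (\<lambda>x. c)"
  unfolding affn_def by (metis mult.commute mult.right_neutral distrib_left)

lemma affn_comp: "affn (\<lambda>P::real^'k. P$k)"
  unfolding affn_def by simp

lemma affn_add: "affn f \<Longrightarrow> affn g \<Longrightarrow> affn (\<lambda>x. f x + g x)"
  unfolding affn_def by (simp add: algebra_simps)

lemma affn_diff: "affn f \<Longrightarrow> affn g \<Longrightarrow> affn (\<lambda>x. f x - g x)"
  unfolding affn_def by (simp add: algebra_simps)

lemma affn_cmul: "affn f \<Longrightarrow> affn (\<lambda>x. c * f x)"
  unfolding affn_def by (simp add: algebra_simps)

lemma affn_cdiv: "affn f \<Longrightarrow> affn (\<lambda>x. f x / c)"
  unfolding affn_def by (simp add: algebra_simps add_divide_distrib)

lemma affn_sum: "finite I \<Longrightarrow> (\<And>i. i \<in> I \<Longrightarrow> affn (f i)) \<Longrightarrow> affn (\<lambda>x. \<Sum>i\<in>I. f i x)"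
proof (induction I rule: finite_induct)
  case empty then show ?case using affn_const[of 0] by simp
next
  case (insert i I) then show ?case by (simp add: affn_add)
qed

lemma affn_convex: "convex X \<Longrightarrow> affn L \<Longrightarrow> convex_on X L"
  unfolding convex_on_def affn_def by simp

lemma affn_concave: "convex X \<Longrightarrow> affn L \<Longrightarrow> concave_on X L"
  unfolding concave_on_iff affn_def by simp

lemma affn_log: assumes "convex X" "affn L" "\<And>x. x \<in> X \<Longrightarrow> L x > 0"
  shows "convex_on X (\<lambda>x. - log 2 (L x))"
proof -
  have c: "convex_on {0<..} (\<lambda>x. - log 2 x)" by (rule minus_log_convex) simp
  show ?thesis unfolding convex_on_def
  proof (intro conjI assms(1) ballI allI impI)
    fix x y u v assume h: "x \<in> X" "y \<in> X" "0 \<le> (u::real)" "0 \<le> v" "u + v = 1"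
    have "L (u *\<^sub>R x + v *\<^sub>R y) = u * L x + v * L y" using assms(2) h(5) unfolding affn_def by blast
    moreover have "- log 2 (u * L x + v * L y) \<le> u * - log 2 (L x) + v * - log 2 (L y)"
      using c h assms(3)[OF h(1)] assms(3)[OF h(2)] unfolding convex_on_def by auto
    ultimately show "- log 2 (L (u *\<^sub>R x + v *\<^sub>R y)) \<le> u * - log 2 (L x) + v * - log 2 (L y)" by simp
  qed
qed

lemma convex_on_sum_fun: "finite I \<Longrightarrow> convex X \<Longrightarrow> (\<And>i. i \<in> I \<Longrightarrow> convex_on X (f i))
   \<Longrightarrow> convex_on X (\<lambda>x. \<Sum>i\<in>I. f i x)"
proof (induction I rule: finite_induct)
  case empty then show ?case by (simp add: convex_on_const)
next
  case (insert i I) then show ?case by (simp add: convex_on_add)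
qed

lemma tangent_log: assumes "y > 0" "y0 > 0"
  shows "log 2 y \<le> log 2 y0 + (y - y0) / (ln 2 * y0)"
proof -
  have "ln (y / y0) \<le> y / y0 - 1" using assms by (intro ln_le_minus_one) simp
  hence "ln y - ln y0 \<le> (y - y0) / y0" using assms by (simp add: ln_div diff_divide_distrib)
  hence "(ln y - ln y0) / ln 2 \<le> (y - y0) / y0 / ln 2" by (intro divide_right_mono) simp_all
  thus ?thesis using assms by (simp add: log_def diff_divide_distrib algebra_simps)
qed

theorem lemma5:
  fixes a :: "'k::finite \<Rightarrow> 'k \<Rightarrow> real" and d nn \<gamma> \<Delta> \<beta> :: "'k \<Rightarrow> real"
    and c Pmax C0 :: real and Pn :: "real^'k"
  assumes "c > 0" and "Pmax > 0"
    and "\<And>k k'. a k k' \<ge> 0" and "\<And>k. d k \<ge> 0" and "\<And>k. nn k > 0"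
    and "\<And>k. a k k \<ge> d k" and "\<And>k. \<gamma> k \<ge> 0"
    and "\<And>k. Pn$k \<ge> 0"
    and "C0 > 0" and "\<And>k. \<Delta> k \<ge> 1" and "\<And>k. \<beta> k > 0"
  shows "CCFP (\<lambda>P. \<Sum>k\<in>UNIV. R_bar c a d nn k P Pn)
              (\<lambda>P. P_N C0 \<Delta> \<beta> P (\<lambda>k. R_hat c a d nn k P Pn))
              (feasible_set Pmax a d nn \<gamma>)"
proof -
  define X where "X = feasible_set Pmax a d nn \<gamma>"
  define hA where "hA k P = (\<Sum>k'\<in>UNIV. a k k' * P$k') + nn k" for k and P :: "real^'k"
  define hB where "hB k P = (\<Sum>k'\<in>UNIV. a k k' * P$k') - d k * P$k + nn k" for k and P :: "real^'k"
  have affA: "affn (hA k)" for k unfolding hA_def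
    by (intro affn_add affn_sum affn_cmul affn_comp affn_const) auto
  have affB: "affn (hB k)" for k unfolding hB_def
    by (intro affn_add affn_diff affn_sum affn_cmul affn_comp affn_const) auto
  have posA: "hA k P > 0" if "\<And>j. P$j \<ge> 0" for k P
  proof -
    have "(\<Sum>k'\<in>UNIV. a k k' * P$k') \<ge> 0" using that assms(3) by (intro sum_nonneg) simp
    thus ?thesis using assms(5)[of k] unfolding hA_def by linarith
  qed
  have posB: "hB k P > 0" if "\<And>j. P$j \<ge> 0" for k P
  proof -
    have "(\<Sum>k'\<in>UNIV. a k k' * P$k') \<ge> a k k * P$k"
      using that assms(3) by (intro member_le_sum) simp_all
    moreover have "a k k * P$k \<ge> d k * P$k" using that[of k] assms(6)[of k] by (simp add: mult_right_mono)
    ultimately show ?thesis using assms(5)[of k] unfolding hB_def by linarith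
  qed
  have BleA: "hB k P \<le> hA k P" if "\<And>j. P$j \<ge> 0" for k P
    using that[of k] assms(4)[of k] unfolding hA_def hB_def by simp
  have Xnn: "P \<in> X \<Longrightarrow> P$j \<ge> 0" for P j unfolding X_def feasible_set_def by auto
  have cX: "convex X"
    unfolding convex_def
  proof (intro ballI allI impI)
    fix x y u v assume h: "x \<in> X" "y \<in> X" "0 \<le> (u::real)" "0 \<le> v" "u + v = 1"
    define G where "G k P = \<gamma> k * ((\<Sum>k'\<in>UNIV. a k k' * P$k') + nn k) - (1 + \<gamma> k) * d k * P$k"
      for k and P :: "real^'k"
    have affG: "affn (G k)" for k unfolding G_def
      by (intro affn_add affn_diff affn_sum affn_cmul affn_comp affn_const) auto
    have Gx: "G k x \<le> 0" "G k y \<le> 0" "0 \<le> x$k" "x$k \<le> Pmax" "0 \<le> y$k" "y$k \<le> Pmax" for k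
      using h(1,2) unfolding X_def feasible_set_def G_def by auto
    have e: "G k (u *\<^sub>R x + v *\<^sub>R y) = u * G k x + v * G k y" for k
      using affG[of k] h(5) unfolding affn_def by blast
    have "u * G k x + v * G k y \<le> 0" for k
      using Gx(1,2)[of k] h(3,4) by (smt (verit) mult_nonneg_nonpos)
    hence G': "G k (u *\<^sub>R x + v *\<^sub>R y) \<le> 0" for k using e by simp
    have L: "0 \<le> (u *\<^sub>R x + v *\<^sub>R y)$k" for k using Gx h by simp
    have U: "(u *\<^sub>R x + v *\<^sub>R y)$k \<le> Pmax" for k
    proof -
      have "u * x$k \<le> u * Pmax" "v * y$k \<le> v * Pmax" using Gx h by (simp_all add: mult_left_mono)
      hence "u * x$k + v * y$k \<le> (u + v) * Pmax" by (simp add: distrib_right)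
      thus ?thesis using h(5) by simp
    qed
    show "u *\<^sub>R x + v *\<^sub>R y \<in> X"
      unfolding X_def feasible_set_def mem_Collect_eq using G'[unfolded G_def] L U by blast
  qed
  have ghat_aff: "affn (\<lambda>P. g_hat a d nn k P Pn)" for k unfolding g_hat_def
    by (intro affn_add affn_diff affn_sum affn_cmul affn_comp affn_const affn_cdiv) auto
  have fhat_aff: "affn (\<lambda>P. f_hat a nn k P Pn)" for k unfolding f_hat_def
    by (intro affn_add affn_diff affn_sum affn_cmul affn_comp affn_const affn_cdiv) auto
  have num: "concave_on X (\<lambda>P. \<Sum>k\<in>UNIV. R_bar c a d nn k P Pn)"
  proof -
    have "convex_on X (\<lambda>P. \<Sum>k\<in>UNIV. c * (- log 2 (hA k P) + g_hat a d nn k P Pn))"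
      using assms(1)
      by (intro convex_on_sum_fun convex_on_cmul convex_on_add affn_log affn_convex cX affA ghat_aff posA Xnn)
         auto
    moreover have "(\<lambda>P. \<Sum>k\<in>UNIV. c * (- log 2 (hA k P) + g_hat a d nn k P Pn))
       = (\<lambda>P. - (\<Sum>k\<in>UNIV. R_bar c a d nn k P Pn))"
      unfolding R_bar_def f_fun_def hA_def by (simp add: sum_negf[symmetric] algebra_simps)
    ultimately show ?thesis unfolding concave_on_def by simp
  qed
  have den: "convex_on X (\<lambda>P. P_N C0 \<Delta> \<beta> P (\<lambda>k. R_hat c a d nn k P Pn))"
  proof -
    have "convex_on X (\<lambda>P. C0 + (\<Sum>k\<in>UNIV. \<Delta> k * P$k) +
        (\<Sum>k\<in>UNIV. (\<beta> k * c) * (f_hat a nn k P Pn + - log 2 (hB k P))))"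
      using assms(1) assms(11)
      by (intro convex_on_sum_fun convex_on_cmul convex_on_add affn_log affn_convex cX affB fhat_aff posB Xnn
          affn_const affn_sum affn_cmul affn_comp) (auto intro: less_imp_le)
    moreover have "(\<lambda>P. C0 + (\<Sum>k\<in>UNIV. \<Delta> k * P$k) +
        (\<Sum>k\<in>UNIV. (\<beta> k * c) * (f_hat a nn k P Pn + - log 2 (hB k P))))
       = (\<lambda>P. P_N C0 \<Delta> \<beta> P (\<lambda>k. R_hat c a d nn k P Pn))"
      unfolding P_N_def R_hat_def g_fun_def hB_def by (simp add: algebra_simps)
    ultimately show ?thesis by simp
  qed
  have pos: "P_N C0 \<Delta> \<beta> P (\<lambda>k. R_hat c a d nn k P Pn) > 0" if "P \<in> X" for P
  proof -
    have nn: "\<And>j. P$j \<ge> 0" using Xnn that by blast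
    have R: "R_hat c a d nn k P Pn \<ge> 0" for k
    proof -
      have "log 2 (hA k P) \<le> log 2 (hA k Pn) + (hA k P - hA k Pn) / (ln 2 * hA k Pn)"
        by (intro tangent_log posA nn assms(8))
      moreover have "hA k P - hA k Pn = (\<Sum>k'\<in>UNIV. a k k' * (P$k' - Pn$k'))"
        unfolding hA_def by (simp add: algebra_simps sum_subtractf)
      ultimately have "f_fun a nn k P \<le> f_hat a nn k P Pn"
        unfolding f_hat_def f_fun_def hA_def by simp
      moreover have "g_fun a d nn k P \<le> f_fun a nn k P"
        using BleA[OF nn, of k] posB[OF nn, of k] unfolding g_fun_def f_fun_def hA_def hB_def
        by simp
      ultimately show ?thesis unfolding R_hat_def using assms(1) by simp
    qed
    have "(\<Sum>k\<in>UNIV. \<Delta> k * P$k) \<ge> 0" using nn assms(10)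
      by (intro sum_nonneg) (smt (verit) mult_nonneg_nonneg)
    moreover have "(\<Sum>k\<in>UNIV. \<beta> k * R_hat c a d nn k P Pn) \<ge> 0" using R assms(11)
      by (intro sum_nonneg) (smt (verit) mult_nonneg_nonneg)
    ultimately show ?thesis unfolding P_N_def using assms(9) by linarith
  qed
  show ?thesis unfolding CCFP_def X_def[symmetric] using num den pos cX by blast
qed

end
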